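(* Let $\mathcal O$ be the suboperad of $\mathrm{CNCB}$ generated by $s:=T_{ubb}$ and $w:=T_{bub}$. Then $\mathcal O$ admits the presentation with generators $s,w$ of arity $2$ and relations $$w\circ_1 w=w\circ_2 w,\qquad s\circ_1 s=s\circ_2 w.$$ That is, $\mathcal O$ is isomorphic, via the morphism sending the generators to $s$ and $w$, to the quotient of the free operad on two binary generators by the operadic congruence generated by these relations.
   Context: For $n\ge2$, a bicoloured noncrossing configuration (BNC) of size $n$ is a regular polygon with vertices $1,\dots,n+1$ clockwise, together with disjoint sets of blue and red arcs among the arcs $(i,j)$, $1\le i<j\le n+1$. The arcs $(i,i+1)$ are the edges ($i$th edge), $(1,n+1)$ is the base, and the others are diagonals. Coloured arcs are pairwise noncrossing ($(i,j),(k,l)$ cross iff $i<k<j<l$ or $k<i<l<j$), and red arcs are diagonals. There is one BNC of size $1$, a blue segment, which is the unit. The operad $\mathrm{CNCB}$ has the BNCs as elements (arity = size). Its composition $\mathfrak C\circ_i\mathfrak D$ ($\mathfrak C$ of size $n$, $\mathfrak D$ of size $m$) glues the base of $\mathfrak D$ on the $i$th edge of $\mathfrak C$. Arcs $(a,b)$ of $\mathfrak C$ become $(\sigma(a),\sigma(b))$ with $\sigma(v)=v$ for $v\le i$ and $v+m-1$ otherwise, and arcs $(a,b)$ of $\mathfrak D$ become $(a+i-1,b+i-1)$, keeping colours. The exception is the arc $(i,i+m)$, which is red if the $i$th edge of $\mathfrak C$ and the base of $\mathfrak D$ are both uncoloured, blue if both are blue, and uncoloured otherwise. For $x,y,z\in\{b,u\}$,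 $T_{xyz}$ denotes the BNC of size $2$ (a triangle with vertices $1,2,3$) whose first edge $(1,2)$ has colour $x$, whose base $(1,3)$ has colour $y$, and whose second edge $(2,3)$ has colour $z$, where $b$ = blue and $u$ = uncoloured. The suboperad generated by a set is the smallest suboperad containing it. *)

theory Defs
  imports Main
begin

text \<open>A BNC of size n: vertices 1..n+1; blue arcs and red arcs as sets of pairs (i,j), i<j.\<close>
datatype bnc = BNC (bsize: nat) (blue: "(nat \<times> nat) set") (red: "(nat \<times> nat) set")

definition arcs :: "nat \<Rightarrow> (nat \<times> nat) set" where
  "arcs n = {(i,j). 1 \<le> i \<and> i < j \<and> j \<le> n + 1}"

definition crossing :: "nat \<times> nat \<Rightarrow> nat \<times> nat \<Rightarrow> bool" where
  "crossing p q = (case p of (i,j) \<Rightarrow> case q of (k,l) \<Rightarrow>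
      (i < k \<and> k < j \<and> j < l) \<or> (k < i \<and> i < l \<and> l < j))"

definition is_diagonal :: "nat \<Rightarrow> nat \<times> nat \<Rightarrow> bool" where
  "is_diagonal n p = (p \<in> arcs n \<and> snd p \<noteq> fst p + 1 \<and> p \<noteq> (1, n + 1))"

definition bnc_unit :: bnc where
  "bnc_unit = BNC 1 {(1,2)} {}"

definition is_bnc :: "bnc \<Rightarrow> bool" where
  "is_bnc C = (if bsize C = 1 then C = bnc_unit else
     2 \<le> bsize C \<and> blue C \<subseteq> arcs (bsize C) \<and> red C \<subseteq> arcs (bsize C)
     \<and> blue C \<inter> red C = {}
     \<and> (\<forall>p\<in>red C. is_diagonal (bsize C) p)
     \<and> (\<forall>p\<in>blue C \<union> red C. \<forall>q\<in>blue C \<union> red C. \<not> crossing p q))"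

text \<open>Partial composition C \<circ>_i D: glue the base of D on the i-th edge of C.\<close>
definition bnc_comp :: "bnc \<Rightarrow> nat \<Rightarrow> bnc \<Rightarrow> bnc" where
  "bnc_comp C i D = (let m = bsize D; n = bsize C;
      \<sigma> = (\<lambda>v. if v \<le> i then v else v + m - 1);
      mapC = (\<lambda>A. {(\<sigma> a, \<sigma> b) | a b. (a,b) \<in> A \<and> (a,b) \<noteq> (i, i+1)});
      mapD = (\<lambda>A. {(a + i - 1, b + i - 1) | a b. (a,b) \<in> A \<and> (a,b) \<noteq> (1, m+1)});
      eb = ((i, i+1) \<in> blue C); bb = ((1, m+1) \<in> blue D)
    in BNC (n + m - 1)
       (mapC (blue C) \<union> mapD (blue D) \<union> (if eb \<and> bb then {(i, i+m)} else {}))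
       (mapC (red C) \<union> mapD (red D) \<union> (if \<not> eb \<and> \<not> bb then {(i, i+m)} else {})))"

text \<open>T_xyz with first edge (1,2), base (1,3), second edge (2,3).\<close>
definition s_bnc :: bnc where "s_bnc = BNC 2 {(1,3),(2,3)} {}"   (* T_ubb *)
definition w_bnc :: bnc where "w_bnc = BNC 2 {(1,2),(2,3)} {}"   (* T_bub *)

inductive_set gen_sub :: "bnc set" where
  unit: "bnc_unit \<in> gen_sub"
| gs: "s_bnc \<in> gen_sub"
| gw: "w_bnc \<in> gen_sub"
| comp: "C \<in> gen_sub \<Longrightarrow> D \<in> gen_sub \<Longrightarrow> 1 \<le> i \<Longrightarrow> i \<le> bsize C
          \<Longrightarrow> bnc_comp C i D \<in> gen_sub"

datatype gen = S | W

datatype tree = Leaf | Node gen tree tree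

fun arity :: "tree \<Rightarrow> nat" where
  "arity Leaf = 1"
| "arity (Node g l r) = arity l + arity r"

fun graft :: "tree \<Rightarrow> nat \<Rightarrow> tree \<Rightarrow> tree" where
  "graft Leaf i u = (if i = 1 then u else Leaf)"
| "graft (Node g l r) i u =
     (if i \<le> arity l then Node g (graft l i u) r else Node g l (graft r (i - arity l) u))"

definition gtree :: "gen \<Rightarrow> tree" where "gtree g = Node g Leaf Leaf"

inductive cong :: "tree \<Rightarrow> tree \<Rightarrow> bool" where
  rel1: "cong (graft (gtree W) 1 (gtree W)) (graft (gtree W) 2 (gtree W))"
| rel2: "cong (graft (gtree S) 1 (gtree S)) (graft (gtree S) 2 (gtree W))"
| refl: "cong t t"
| sym: "cong t u \<Longrightarrow> cong u t"
| trans: "cong t u \<Longrightarrow> cong u v \<Longrightarrow> cong t v"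
| compL: "cong t t' \<Longrightarrow> 1 \<le> i \<Longrightarrow> i \<le> arity t \<Longrightarrow> cong (graft t i u) (graft t' i u)"
| compR: "cong u u' \<Longrightarrow> 1 \<le> i \<Longrightarrow> i \<le> arity t \<Longrightarrow> cong (graft t i u) (graft t i u')"

fun gen_bnc :: "gen \<Rightarrow> bnc" where
  "gen_bnc S = s_bnc"
| "gen_bnc W = w_bnc"

fun eval :: "tree \<Rightarrow> bnc" where
  "eval Leaf = bnc_unit"
| "eval (Node g l r) = bnc_comp (bnc_comp (gen_bnc g) 2 (eval r)) 1 (eval l)"

end

theory Submission
  imports Defs
begin


definition ci :: "nat \<Rightarrow> nat \<Rightarrow> nat \<Rightarrow> nat" where
  "ci i m x = (if x \<le> i then x else x + 1 - m)"

lemma bsize_comp[simp]: "bsize (bnc_comp C i D) = bsize C + bsize D - 1"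
  by (simp add: bnc_comp_def Let_def)

lemma mapC_iff:
  assumes "1 \<le> m"
  shows "(x,y) \<in> {((if a \<le> i then a else a + m - 1), (if b \<le> i then b else b + m - 1)) | a b. (a,b) \<in> A \<and> (a,b) \<noteq> (i, Suc i)}
     \<longleftrightarrow> ((x \<le> i \<or> i + m \<le> x) \<and> (y \<le> i \<or> i + m \<le> y) \<and> (ci i m x, ci i m y) \<in> A \<and> (ci i m x, ci i m y) \<noteq> (i, Suc i))"
  (is "?L \<longleftrightarrow> ?R")
proof
  assume ?L
  then obtain a b where ab: "(a,b) \<in> A" "(a,b) \<noteq> (i, Suc i)"
    "x = (if a \<le> i then a else a + m - 1)" "y = (if b \<le> i then b else b + m - 1)" by blast
  have "ci i m x = a" "ci i m y = b" using ab(3,4) assms by (auto simp: ci_def)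
  then show ?R using ab assms by auto
next
  assume R: ?R
  have "x = (if ci i m x \<le> i then ci i m x else ci i m x + m - 1)"
       "y = (if ci i m y \<le> i then ci i m y else ci i m y + m - 1)"
    using R assms by (auto simp: ci_def)
  then show ?L using R by blast
qed

lemma mapD_iff:
  assumes "1 \<le> i" "A \<subseteq> arcs m"
  shows "(x,y) \<in> {(a + i - 1, b + i - 1) | a b. (a,b) \<in> A \<and> (a,b) \<noteq> (1, m+1)}
     \<longleftrightarrow> (i \<le> x \<and> i \<le> y \<and> (x + 1 - i, y + 1 - i) \<in> A \<and> (x + 1 - i, y + 1 - i) \<noteq> (1, m+1))"
  (is "?L \<longleftrightarrow> ?R")
proof
  assume ?L
  then obtain a b where ab: "(a,b) \<in> A" "(a,b) \<noteq> (1, m+1)" "x = a + i - 1" "y = b + i - 1" by blast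
  have "1 \<le> a" "1 \<le> b" using ab(1) assms(2) by (auto simp: arcs_def)
  then show ?R using ab assms by auto
next
  assume R: ?R
  have "x = (x + 1 - i) + i - 1" "y = (y + 1 - i) + i - 1" using R assms by auto
  then show ?L using R by blast
qed

lemma blue_comp_iff:
  assumes "1 \<le> i" "1 \<le> bsize D" "blue D \<subseteq> arcs (bsize D)"
  shows "(x,y) \<in> blue (bnc_comp C i D) \<longleftrightarrow>
    ((x \<le> i \<or> i + bsize D \<le> x) \<and> (y \<le> i \<or> i + bsize D \<le> y) \<and> (ci i (bsize D) x, ci i (bsize D) y) \<in> blue C \<and> (ci i (bsize D) x, ci i (bsize D) y) \<noteq> (i, Suc i))
  \<or> (i \<le> x \<and> i \<le> y \<and> (x + 1 - i, y + 1 - i) \<in> blue D \<and> (x + 1 - i, y + 1 - i) \<noteq> (1, bsize D + 1))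
  \<or> ((i, Suc i) \<in> blue C \<and> (1, bsize D + 1) \<in> blue D \<and> x = i \<and> y = i + bsize D)"
  unfolding bnc_comp_def Let_def
  using mapC_iff[OF assms(2), of x y i "blue C"] mapD_iff[OF assms(1) assms(3), of x y]
  by (simp only: bnc.sel Un_iff Suc_eq_plus1) auto

lemma red_comp_iff:
  assumes "1 \<le> i" "1 \<le> bsize D" "red D \<subseteq> arcs (bsize D)"
  shows "(x,y) \<in> red (bnc_comp C i D) \<longleftrightarrow>
    ((x \<le> i \<or> i + bsize D \<le> x) \<and> (y \<le> i \<or> i + bsize D \<le> y) \<and> (ci i (bsize D) x, ci i (bsize D) y) \<in> red C \<and> (ci i (bsize D) x, ci i (bsize D) y) \<noteq> (i, Suc i))
  \<or> (i \<le> x \<and> i \<le> y \<and> (x + 1 - i, y + 1 - i) \<in> red D \<and> (x + 1 - i, y + 1 - i) \<noteq> (1, bsize D + 1))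
  \<or> ((i, Suc i) \<notin> blue C \<and> (1, bsize D + 1) \<notin> blue D \<and> x = i \<and> y = i + bsize D)"
  unfolding bnc_comp_def Let_def
  using mapC_iff[OF assms(2), of x y i "red C"] mapD_iff[OF assms(1) assms(3), of x y]
  by (simp only: bnc.sel Un_iff Suc_eq_plus1) auto


definition bwf :: "bnc \<Rightarrow> bool" where
  "bwf C \<longleftrightarrow> 1 \<le> bsize C \<and> (bsize C = 1 \<longrightarrow> C = bnc_unit) \<and> blue C \<subseteq> arcs (bsize C)
     \<and> red C \<subseteq> arcs (bsize C) \<and> (\<forall>(a,b)\<in>red C. b \<noteq> a + 1 \<and> (a,b) \<noteq> (1, bsize C + 1))"

lemma wf_unit: "bwf bnc_unit" by (auto simp: bwf_def bnc_unit_def arcs_def)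

lemma comp_unit_unit: "bnc_comp bnc_unit 1 bnc_unit = bnc_unit"
  by (auto simp: bnc_comp_def bnc_unit_def Let_def)

lemma wf_comp:
  assumes C: "bwf C" and D: "bwf D" and i: "1 \<le> i" "i \<le> bsize C"
  shows "bwf (bnc_comp C i D)"
proof -
  let ?n = "bsize C" and ?m = "bsize D"
  have n1: "1 \<le> ?n" and m1: "1 \<le> ?m" using C D by (auto simp: bwf_def)
  have Db: "blue D \<subseteq> arcs ?m" and Dr: "red D \<subseteq> arcs ?m" using D by (auto simp: bwf_def)
  have Cb: "blue C \<subseteq> arcs ?n" and Cr: "red C \<subseteq> arcs ?n" using C by (auto simp: bwf_def)
  have Crd: "\<And>a b. (a,b) \<in> red C \<Longrightarrow> b \<noteq> a + 1 \<and> (a,b) \<noteq> (1, ?n + 1)" using C by (auto simp: bwf_def)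
  have Drd: "\<And>a b. (a,b) \<in> red D \<Longrightarrow> b \<noteq> a + 1 \<and> (a,b) \<noteq> (1, ?m + 1)" using D by (auto simp: bwf_def)
  have Cu: "?n = 1 \<Longrightarrow> C = bnc_unit" and Du: "?m = 1 \<Longrightarrow> D = bnc_unit" using C D by (auto simp: bwf_def)
  have s1: "bsize (bnc_comp C i D) = 1 \<Longrightarrow> bnc_comp C i D = bnc_unit"
  proof -
    assume "bsize (bnc_comp C i D) = 1"
    then have "?n = 1" "?m = 1" using n1 m1 by auto
    moreover then have "i = 1" using i by auto
    ultimately show ?thesis using Cu Du comp_unit_unit by simp
  qed
  have b: "blue (bnc_comp C i D) \<subseteq> arcs (?n + ?m - 1)"
  proof (clarify)
    fix x y assume "(x,y) \<in> blue (bnc_comp C i D)"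
    then have h: "((x \<le> i \<or> i + ?m \<le> x) \<and> (y \<le> i \<or> i + ?m \<le> y) \<and> (ci i ?m x, ci i ?m y) \<in> arcs ?n)
  \<or> (i \<le> x \<and> i \<le> y \<and> (x + 1 - i, y + 1 - i) \<in> arcs ?m)
  \<or> ((i, Suc i) \<in> arcs ?n \<and> x = i \<and> y = i + ?m)"
      unfolding blue_comp_iff[OF i(1) m1 Db] using Cb Db by blast
    show "(x,y) \<in> arcs (?n + ?m - 1)"
      using h i n1 m1 by (auto simp: arcs_def ci_def split: if_splits)
  qed
  have r: "(x,y) \<in> arcs (?n + ?m - 1) \<and> y \<noteq> x + 1 \<and> (x,y) \<noteq> (1, ?n + ?m - 1 + 1)"
    if "(x,y) \<in> red (bnc_comp C i D)" for x y
  proof -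
    have h: "((x \<le> i \<or> i + ?m \<le> x) \<and> (y \<le> i \<or> i + ?m \<le> y) \<and> (ci i ?m x, ci i ?m y) \<in> arcs ?n
        \<and> ci i ?m y \<noteq> ci i ?m x + 1 \<and> (ci i ?m x, ci i ?m y) \<noteq> (1, ?n + 1))
  \<or> (i \<le> x \<and> i \<le> y \<and> (x + 1 - i, y + 1 - i) \<in> arcs ?m \<and> y + 1 - i \<noteq> x + 1 - i + 1 \<and> (x + 1 - i, y + 1 - i) \<noteq> (1, ?m + 1))
  \<or> ((i, Suc i) \<notin> blue C \<and> (1, ?m + 1) \<notin> blue D \<and> x = i \<and> y = i + ?m)"
      using that unfolding red_comp_iff[OF i(1) m1 Dr] using Cr Dr Crd Drd by blast
    have "?m = 1 \<Longrightarrow> (1, ?m + 1) \<in> blue D" using Du by (simp add: bnc_unit_def)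
    moreover have "?n = 1 \<Longrightarrow> (i, Suc i) \<in> blue C" using Cu i by (simp add: bnc_unit_def)
    ultimately show "(x,y) \<in> arcs (?n + ?m - 1) \<and> y \<noteq> x + 1 \<and> (x,y) \<noteq> (1, ?n + ?m - 1 + 1)"
      using h i n1 m1 by (auto simp: arcs_def ci_def split: if_splits)
  qed
  show ?thesis using s1 b r n1 m1 unfolding bwf_def by auto
qed


lemma bnc_eqI: "bsize C = bsize D \<Longrightarrow> blue C = blue D \<Longrightarrow> red C = red D \<Longrightarrow> C = D"
  by (cases C; cases D) auto

lemma wfD: assumes "bwf C" shows "1 \<le> bsize C" "blue C \<subseteq> arcs (bsize C)" "red C \<subseteq> arcs (bsize C)"
  using assms by (auto simp: bwf_def)

lemma arcsD: "A \<subseteq> arcs n \<Longrightarrow> \<forall>a b. (a,b) \<in> A \<longrightarrow> 1 \<le> a \<and> a < b \<and> b \<le> n + 1"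
  by (auto simp: arcs_def)

lemma wf_redD: "bwf C \<Longrightarrow> \<forall>a b. (a,b) \<in> red C \<longrightarrow> b \<noteq> a + 1 \<and> (a,b) \<noteq> (1, bsize C + 1)"
  by (auto simp: bwf_def)

lemma unit_comp: assumes D: "bwf D" shows "bnc_comp bnc_unit 1 D = D"
proof (rule bnc_eqI)
  note w = wfD[OF D]
  show "bsize (bnc_comp bnc_unit 1 D) = bsize D" by (simp add: bnc_unit_def)
  show "blue (bnc_comp bnc_unit 1 D) = blue D"
  proof (rule set_eqI, clarify)
    fix x y
    show "(x,y) \<in> blue (bnc_comp bnc_unit 1 D) \<longleftrightarrow> (x,y) \<in> blue D"
      unfolding blue_comp_iff[OF order_refl w(1) w(2)] using arcsD[OF w(2), rule_format, of x y]
      by (auto simp: bnc_unit_def ci_def)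
  qed
  show "red (bnc_comp bnc_unit 1 D) = red D"
  proof (rule set_eqI, clarify)
    fix x y
    show "(x,y) \<in> red (bnc_comp bnc_unit 1 D) \<longleftrightarrow> (x,y) \<in> red D"
      unfolding red_comp_iff[OF order_refl w(1) w(3)] using arcsD[OF w(3), rule_format, of x y] wf_redD[OF D, rule_format, of x y]
      by (auto simp: bnc_unit_def ci_def)
  qed
qed

lemma comp_unit: assumes C: "bwf C" and i: "1 \<le> i" "i \<le> bsize C" shows "bnc_comp C i bnc_unit = C"
proof (rule bnc_eqI)
  note w = wfD[OF C]
  have u: "1 \<le> bsize bnc_unit" "blue bnc_unit \<subseteq> arcs (bsize bnc_unit)" "red bnc_unit \<subseteq> arcs (bsize bnc_unit)"
    by (auto simp: bnc_unit_def arcs_def)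
  show "bsize (bnc_comp C i bnc_unit) = bsize C" by (simp add: bnc_unit_def)
  show "blue (bnc_comp C i bnc_unit) = blue C"
  proof (rule set_eqI, clarify)
    fix x y
    show "(x,y) \<in> blue (bnc_comp C i bnc_unit) \<longleftrightarrow> (x,y) \<in> blue C"
      unfolding blue_comp_iff[OF i(1) u(1) u(2)] using arcsD[OF w(2), rule_format, of x y]
      by (auto simp: bnc_unit_def ci_def)
  qed
  show "red (bnc_comp C i bnc_unit) = red C"
  proof (rule set_eqI, clarify)
    fix x y
    show "(x,y) \<in> red (bnc_comp C i bnc_unit) \<longleftrightarrow> (x,y) \<in> red C"
      unfolding red_comp_iff[OF i(1) u(1) u(3)] using arcsD[OF w(3), rule_format, of x y] wf_redD[OF C, rule_format, of x y]
      by (auto simp: bnc_unit_def ci_def)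
  qed
qed


definition bl :: "bnc \<Rightarrow> int \<Rightarrow> int \<Rightarrow> bool" where
  "bl C a b \<longleftrightarrow> 0 < a \<and> 0 < b \<and> (nat a, nat b) \<in> blue C"
definition rd :: "bnc \<Rightarrow> int \<Rightarrow> int \<Rightarrow> bool" where
  "rd C a b \<longleftrightarrow> 0 < a \<and> 0 < b \<and> (nat a, nat b) \<in> red C"

lemma bl_comp:
  assumes "1 \<le> i" "1 \<le> bsize D" "blue D \<subseteq> arcs (bsize D)"
  shows "bl (bnc_comp C i D) x y \<longleftrightarrow> 0 < x \<and> 0 < y \<and> (
    ((x \<le> int i \<or> int i + int (bsize D) \<le> x) \<and> (y \<le> int i \<or> int i + int (bsize D) \<le> y)
      \<and> bl C (if x \<le> int i then x else x + 1 - int (bsize D)) (if y \<le> int i then y else y + 1 - int (bsize D))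
      \<and> ((if x \<le> int i then x else x + 1 - int (bsize D)), (if y \<le> int i then y else y + 1 - int (bsize D))) \<noteq> (int i, int i + 1))
  \<or> (int i \<le> x \<and> int i \<le> y \<and> bl D (x + 1 - int i) (y + 1 - int i) \<and> (x + 1 - int i, y + 1 - int i) \<noteq> (1, int (bsize D) + 1))
  \<or> (bl C (int i) (int i + 1) \<and> bl D 1 (int (bsize D) + 1) \<and> x = int i \<and> y = int i + int (bsize D)))"
proof (cases "0 < x \<and> 0 < y")
  case True
  define x' where "x' = nat x"
  define y' where "y' = nat y"
  have xy: "x = int x'" "y = int y'" "0 < x'" "0 < y'" using True by (auto simp: x'_def y'_def)
  let ?m = "bsize D"
  have h1: "(if int v \<le> int i then int v else int v + 1 - int ?m) = int (ci i ?m v) \<and> 0 < ci i ?m v"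
    if "v \<le> i \<or> i + ?m \<le> v" "0 < v" for v
    using that assms(1,2) by (auto simp: ci_def)
  have h2: "int v + 1 - int i = int (v + 1 - i) \<and> 0 < v + 1 - i" if "i \<le> v" for v
    using that by auto
  have blint: "bl E (int a) (int b) \<longleftrightarrow> 0 < a \<and> 0 < b \<and> (a,b) \<in> blue E" for E a b
    by (simp add: bl_def)
  have D1: "((x \<le> int i \<or> int i + int ?m \<le> x) \<and> (y \<le> int i \<or> int i + int ?m \<le> y)
      \<and> bl C (if x \<le> int i then x else x + 1 - int ?m) (if y \<le> int i then y else y + 1 - int ?m)
      \<and> ((if x \<le> int i then x else x + 1 - int ?m), (if y \<le> int i then y else y + 1 - int ?m)) \<noteq> (int i, int i + 1))
     \<longleftrightarrow> ((x' \<le> i \<or> i + ?m \<le> x') \<and> (y' \<le> i \<or> i + ?m \<le> y') \<and> (ci i ?m x', ci i ?m y') \<in> blue C \<and> (ci i ?m x', ci i ?m y') \<noteq> (i, Suc i))"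
  proof (cases "(x' \<le> i \<or> i + ?m \<le> x') \<and> (y' \<le> i \<or> i + ?m \<le> y')")
    case True
    have e1: "(if x \<le> int i then x else x + 1 - int ?m) = int (ci i ?m x')" "0 < ci i ?m x'"
      using h1[of x'] True xy by auto
    have e2: "(if y \<le> int i then y else y + 1 - int ?m) = int (ci i ?m y')" "0 < ci i ?m y'"
      using h1[of y'] True xy by auto
    have e3: "(x \<le> int i \<or> int i + int ?m \<le> x) \<and> (y \<le> int i \<or> int i + int ?m \<le> y)"
      using True xy by auto
    show ?thesis unfolding e1(1) e2(1) blint using e1(2) e2(2) e3 True by auto
  next
    case False
    then show ?thesis using xy by auto
  qed
  have D2: "(int i \<le> x \<and> int i \<le> y \<and> bl D (x + 1 - int i) (y + 1 - int i) \<and> (x + 1 - int i, y + 1 - int i) \<noteq> (1, int ?m + 1))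
     \<longleftrightarrow> (i \<le> x' \<and> i \<le> y' \<and> (x' + 1 - i, y' + 1 - i) \<in> blue D \<and> (x' + 1 - i, y' + 1 - i) \<noteq> (1, ?m + 1))"
  proof (cases "i \<le> x' \<and> i \<le> y'")
    case True
    have e1: "x + 1 - int i = int (x' + 1 - i)" "0 < x' + 1 - i" "y + 1 - int i = int (y' + 1 - i)" "0 < y' + 1 - i"
      using h2[of x'] h2[of y'] True xy by auto
    show ?thesis unfolding e1(1) e1(3) blint using e1(2) e1(4) True xy by auto
  next
    case False
    then show ?thesis using xy by auto
  qed
  have D3: "(bl C (int i) (int i + 1) \<and> bl D 1 (int ?m + 1) \<and> x = int i \<and> y = int i + int ?m)
     \<longleftrightarrow> ((i, Suc i) \<in> blue C \<and> (1, ?m + 1) \<in> blue D \<and> x' = i \<and> y' = i + ?m)"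
  proof -
    have a: "bl C (int i) (int i + 1) = ((i, Suc i) \<in> blue C)" using assms(1) by (simp add: bl_def nat_add_distrib)
    have b: "bl D 1 (int ?m + 1) = ((1, ?m + 1) \<in> blue D)" by (simp add: bl_def nat_add_distrib)
    have c: "(x = int i \<and> y = int i + int ?m) = (x' = i \<and> y' = i + ?m)" using xy by auto
    show ?thesis unfolding a b c ..
  qed
  have B: "bl (bnc_comp C i D) x y \<longleftrightarrow> (x',y') \<in> blue (bnc_comp C i D)"
    using xy by (simp add: bl_def)
  show ?thesis
    unfolding B D1 D2 D3 blue_comp_iff[OF assms] using True by (simp only: simp_thms)
qed (auto simp: bl_def)

lemma rd_comp:
  assumes "1 \<le> i" "1 \<le> bsize D" "red D \<subseteq> arcs (bsize D)"
  shows "rd (bnc_comp C i D) x y \<longleftrightarrow> 0 < x \<and> 0 < y \<and> (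
    ((x \<le> int i \<or> int i + int (bsize D) \<le> x) \<and> (y \<le> int i \<or> int i + int (bsize D) \<le> y)
      \<and> rd C (if x \<le> int i then x else x + 1 - int (bsize D)) (if y \<le> int i then y else y + 1 - int (bsize D))
      \<and> ((if x \<le> int i then x else x + 1 - int (bsize D)), (if y \<le> int i then y else y + 1 - int (bsize D))) \<noteq> (int i, int i + 1))
  \<or> (int i \<le> x \<and> int i \<le> y \<and> rd D (x + 1 - int i) (y + 1 - int i) \<and> (x + 1 - int i, y + 1 - int i) \<noteq> (1, int (bsize D) + 1))
  \<or> (\<not> bl C (int i) (int i + 1) \<and> \<not> bl D 1 (int (bsize D) + 1) \<and> x = int i \<and> y = int i + int (bsize D)))"
proof (cases "0 < x \<and> 0 < y")
  case True
  define x' where "x' = nat x"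
  define y' where "y' = nat y"
  have xy: "x = int x'" "y = int y'" "0 < x'" "0 < y'" using True by (auto simp: x'_def y'_def)
  let ?m = "bsize D"
  have h1: "(if int v \<le> int i then int v else int v + 1 - int ?m) = int (ci i ?m v) \<and> 0 < ci i ?m v"
    if "v \<le> i \<or> i + ?m \<le> v" "0 < v" for v
    using that assms(1,2) by (auto simp: ci_def)
  have h2: "int v + 1 - int i = int (v + 1 - i) \<and> 0 < v + 1 - i" if "i \<le> v" for v
    using that by auto
  have blint: "rd E (int a) (int b) \<longleftrightarrow> 0 < a \<and> 0 < b \<and> (a,b) \<in> red E" for E a b
    by (simp add: rd_def)
  have D1: "((x \<le> int i \<or> int i + int ?m \<le> x) \<and> (y \<le> int i \<or> int i + int ?m \<le> y)
      \<and> rd C (if x \<le> int i then x else x + 1 - int ?m) (if y \<le> int i then y else y + 1 - int ?m)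
      \<and> ((if x \<le> int i then x else x + 1 - int ?m), (if y \<le> int i then y else y + 1 - int ?m)) \<noteq> (int i, int i + 1))
     \<longleftrightarrow> ((x' \<le> i \<or> i + ?m \<le> x') \<and> (y' \<le> i \<or> i + ?m \<le> y') \<and> (ci i ?m x', ci i ?m y') \<in> red C \<and> (ci i ?m x', ci i ?m y') \<noteq> (i, Suc i))"
  proof (cases "(x' \<le> i \<or> i + ?m \<le> x') \<and> (y' \<le> i \<or> i + ?m \<le> y')")
    case True
    have e1: "(if x \<le> int i then x else x + 1 - int ?m) = int (ci i ?m x')" "0 < ci i ?m x'"
      using h1[of x'] True xy by auto
    have e2: "(if y \<le> int i then y else y + 1 - int ?m) = int (ci i ?m y')" "0 < ci i ?m y'"
      using h1[of y'] True xy by auto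
    have e3: "(x \<le> int i \<or> int i + int ?m \<le> x) \<and> (y \<le> int i \<or> int i + int ?m \<le> y)"
      using True xy by auto
    show ?thesis unfolding e1(1) e2(1) blint using e1(2) e2(2) e3 True by auto
  next
    case False
    then show ?thesis using xy by auto
  qed
  have D2: "(int i \<le> x \<and> int i \<le> y \<and> rd D (x + 1 - int i) (y + 1 - int i) \<and> (x + 1 - int i, y + 1 - int i) \<noteq> (1, int ?m + 1))
     \<longleftrightarrow> (i \<le> x' \<and> i \<le> y' \<and> (x' + 1 - i, y' + 1 - i) \<in> red D \<and> (x' + 1 - i, y' + 1 - i) \<noteq> (1, ?m + 1))"
  proof (cases "i \<le> x' \<and> i \<le> y'")
    case True
    have e1: "x + 1 - int i = int (x' + 1 - i)" "0 < x' + 1 - i" "y + 1 - int i = int (y' + 1 - i)" "0 < y' + 1 - i"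
      using h2[of x'] h2[of y'] True xy by auto
    show ?thesis unfolding e1(1) e1(3) blint using e1(2) e1(4) True xy by auto
  next
    case False
    then show ?thesis using xy by auto
  qed
  have D3: "(\<not> bl C (int i) (int i + 1) \<and> \<not> bl D 1 (int ?m + 1) \<and> x = int i \<and> y = int i + int ?m)
     \<longleftrightarrow> ((i, Suc i) \<notin> blue C \<and> (1, ?m + 1) \<notin> blue D \<and> x' = i \<and> y' = i + ?m)"
  proof -
    have a: "bl C (int i) (int i + 1) = ((i, Suc i) \<in> blue C)" using assms(1) by (simp add: bl_def nat_add_distrib)
    have b: "bl D 1 (int ?m + 1) = ((1, ?m + 1) \<in> blue D)" by (simp add: bl_def nat_add_distrib)
    have c: "(x = int i \<and> y = int i + int ?m) = (x' = i \<and> y' = i + ?m)" using xy by auto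
    show ?thesis unfolding a b c ..
  qed
  have B: "rd (bnc_comp C i D) x y \<longleftrightarrow> (x',y') \<in> red (bnc_comp C i D)"
    using xy by (simp add: rd_def)
  show ?thesis
    unfolding B D1 D2 D3 red_comp_iff[OF assms] using True by (simp only: simp_thms)
qed (auto simp: rd_def)


lemma bl_eq: assumes "blue X \<subseteq> arcs n" "blue Y \<subseteq> arcs n'" "\<And>a b. bl X a b \<longleftrightarrow> bl Y a b"
  shows "blue X = blue Y"
proof (rule set_eqI, clarify)
  fix a b
  show "(a,b) \<in> blue X \<longleftrightarrow> (a,b) \<in> blue Y"
    using assms(3)[of "int a" "int b"] assms(1,2) by (auto simp: bl_def arcs_def)
qed

lemma rd_eq: assumes "red X \<subseteq> arcs n" "red Y \<subseteq> arcs n'" "\<And>a b. rd X a b \<longleftrightarrow> rd Y a b"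
  shows "red X = red Y"
proof (rule set_eqI, clarify)
  fix a b
  show "(a,b) \<in> red X \<longleftrightarrow> (a,b) \<in> red Y"
    using assms(3)[of "int a" "int b"] assms(1,2) by (auto simp: rd_def arcs_def)
qed

definition cz :: "int \<Rightarrow> int \<Rightarrow> int \<Rightarrow> int" where
  "cz i m x = (if x \<le> i then x else x + 1 - m)"

definition fc :: "(int \<Rightarrow> int \<Rightarrow> bool) \<Rightarrow> int \<Rightarrow> (int \<Rightarrow> int \<Rightarrow> bool) \<Rightarrow> int \<Rightarrow> int \<Rightarrow> int \<Rightarrow> bool" where
  "fc P i Q m x y \<longleftrightarrow> 0 < x \<and> 0 < y \<and> (
    ((x \<le> i \<or> i + m \<le> x) \<and> (y \<le> i \<or> i + m \<le> y) \<and> P (cz i m x) (cz i m y) \<and> (cz i m x, cz i m y) \<noteq> (i, i + 1))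
  \<or> (i \<le> x \<and> i \<le> y \<and> Q (x + 1 - i) (y + 1 - i) \<and> (x + 1 - i, y + 1 - i) \<noteq> (1, m + 1))
  \<or> (P i (i + 1) \<and> Q 1 (m + 1) \<and> x = i \<and> y = i + m))"

definition fr :: "(int \<Rightarrow> int \<Rightarrow> bool) \<Rightarrow> (int \<Rightarrow> int \<Rightarrow> bool) \<Rightarrow> int \<Rightarrow> (int \<Rightarrow> int \<Rightarrow> bool) \<Rightarrow> (int \<Rightarrow> int \<Rightarrow> bool) \<Rightarrow> int \<Rightarrow> int \<Rightarrow> int \<Rightarrow> bool" where
  "fr P Pb i Q Qb m x y \<longleftrightarrow> 0 < x \<and> 0 < y \<and> (
    ((x \<le> i \<or> i + m \<le> x) \<and> (y \<le> i \<or> i + m \<le> y) \<and> P (cz i m x) (cz i m y) \<and> (cz i m x, cz i m y) \<noteq> (i, i + 1))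
  \<or> (i \<le> x \<and> i \<le> y \<and> Q (x + 1 - i) (y + 1 - i) \<and> (x + 1 - i, y + 1 - i) \<noteq> (1, m + 1))
  \<or> (\<not> Pb i (i + 1) \<and> \<not> Qb 1 (m + 1) \<and> x = i \<and> y = i + m))"

definition g :: "(int \<Rightarrow> int \<Rightarrow> bool) \<Rightarrow> int \<Rightarrow> int \<Rightarrow> int \<Rightarrow> bool" where
  "g P n a b \<longleftrightarrow> 1 \<le> a \<and> a < b \<and> b \<le> n + 1 \<and> P a b"

lemma reg4:
  fixes a b c d x :: int
  assumes "a \<le> b" "b \<le> c" "c \<le> d"
    and "x < a \<Longrightarrow> Z" "x = a \<Longrightarrow> Z" "a < x \<Longrightarrow> x < b \<Longrightarrow> Z" "x = b \<Longrightarrow> Z"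
    "b < x \<Longrightarrow> x < c \<Longrightarrow> Z" "x = c \<Longrightarrow> Z" "c < x \<Longrightarrow> x < d \<Longrightarrow> Z" "x = d \<Longrightarrow> Z" "d < x \<Longrightarrow> Z"
  shows Z
  using assms by linarith

lemma seq_fc:
  assumes "1 \<le> i" "i \<le> n" "1 \<le> k" "k \<le> m" "2 \<le> m" "2 \<le> l"
  shows "fc (fc (g P n) i (g Q m) m) (i + k - 1) (g R l) l x y = fc (g P n) i (fc (g Q m) k (g R l) l) (m + l - 1) x y"
proof -
  have o: "i \<le> i + k - 1" "i + k - 1 \<le> i + k - 1 + l" "i + k - 1 + l \<le> i + m + l - 1" using assms by auto
  show ?thesis
  apply (rule reg4[OF o, of x]; rule reg4[OF o, of y])
  using assms apply (simp_all add: fc_def g_def cz_def algebra_simps)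
  apply auto
  done
qed

lemma seq_fr:
  assumes "1 \<le> i" "i \<le> n" "1 \<le> k" "k \<le> m" "2 \<le> m" "2 \<le> l"
  shows "fr (fr (g P n) (g Pb n) i (g Q m) (g Qb m) m) (fc (g Pb n) i (g Qb m) m) (i + k - 1) (g R l) (g Rb l) l x y
       = fr (g P n) (g Pb n) i (fr (g Q m) (g Qb m) k (g R l) (g Rb l) l) (fc (g Qb m) k (g Rb l) l) (m + l - 1) x y"
proof -
  have o: "i \<le> i + k - 1" "i + k - 1 \<le> i + k - 1 + l" "i + k - 1 + l \<le> i + m + l - 1" using assms by auto
  show ?thesis
  apply (rule reg4[OF o, of x]; rule reg4[OF o, of y])
  using assms apply (simp_all add: fr_def fc_def g_def cz_def algebra_simps)
  apply auto
  done
qed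

lemma par_fc:
  assumes "1 \<le> i" "i < j" "j \<le> n" "2 \<le> m" "2 \<le> l"
  shows "fc (fc (g P n) i (g Q m) m) (j + m - 1) (g R l) l x y = fc (fc (g P n) j (g R l) l) i (g Q m) m x y"
proof -
  have o: "i \<le> i + m" "i + m \<le> j + m - 1" "j + m - 1 \<le> j + m + l - 1" using assms by auto
  show ?thesis
  apply (rule reg4[OF o, of x]; rule reg4[OF o, of y])
  using assms apply (simp_all add: fc_def g_def cz_def algebra_simps)
  apply auto
  done
qed

lemma par_fr:
  assumes "1 \<le> i" "i < j" "j \<le> n" "2 \<le> m" "2 \<le> l"
  shows "fr (fr (g P n) (g Pb n) i (g Q m) (g Qb m) m) (fc (g Pb n) i (g Qb m) m) (j + m - 1) (g R l) (g Rb l) l x y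
     = fr (fr (g P n) (g Pb n) j (g R l) (g Rb l) l) (fc (g Pb n) j (g Rb l) l) i (g Q m) (g Qb m) m x y"
proof -
  have o: "i \<le> i + m" "i + m \<le> j + m - 1" "j + m - 1 \<le> j + m + l - 1" using assms by auto
  show ?thesis
  apply (rule reg4[OF o, of x]; rule reg4[OF o, of y])
  using assms apply (simp_all add: fr_def fc_def g_def cz_def algebra_simps)
  apply auto
  done
qed


lemma bl_comp': assumes "1 \<le> i" "1 \<le> bsize D" "blue D \<subseteq> arcs (bsize D)"
  shows "bl (bnc_comp C i D) = fc (bl C) (int i) (bl D) (int (bsize D))"
  by (rule ext, rule ext, subst bl_comp[OF assms]) (simp add: fc_def cz_def)

lemma rd_comp': assumes "1 \<le> i" "1 \<le> bsize D" "red D \<subseteq> arcs (bsize D)"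
  shows "rd (bnc_comp C i D) = fr (rd C) (bl C) (int i) (rd D) (bl D) (int (bsize D))"
  by (rule ext, rule ext, subst rd_comp[OF assms]) (simp add: fr_def cz_def)

lemma bl_g: "blue C \<subseteq> arcs n \<Longrightarrow> g (bl C) (int n) = bl C"
  by (auto simp: g_def bl_def arcs_def fun_eq_iff)
lemma rd_g: "red C \<subseteq> arcs n \<Longrightarrow> g (rd C) (int n) = rd C"
  by (auto simp: g_def rd_def arcs_def fun_eq_iff)

lemma assoc_seq_main:
  assumes C: "bwf C" and D: "bwf D" and E: "bwf E" and i: "1 \<le> i" "i \<le> bsize C" and k: "1 \<le> k" "k \<le> bsize D"
   and m2: "2 \<le> bsize D" and l2: "2 \<le> bsize E"
  shows "bnc_comp (bnc_comp C i D) (i + k - 1) E = bnc_comp C i (bnc_comp D k E)"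
proof -
  have CD: "bwf (bnc_comp C i D)" using wf_comp C D i by blast
  have DE: "bwf (bnc_comp D k E)" using wf_comp D E k by blast
  note w = wfD[OF C] wfD[OF D] wfD[OF E] wfD[OF CD] wfD[OF DE]
  have ik: "1 \<le> i + k - 1" using i k by auto
  have ik2: "int (i + k - 1) = int i + int k - 1" using i k by auto
  have s: "int (bsize D + bsize E - 1) = int (bsize D) + int (bsize E) - 1" using m2 by auto
  have ii: "1 \<le> int i" "int i \<le> int (bsize C)" "1 \<le> int k" "int k \<le> int (bsize D)" "2 \<le> int (bsize D)" "2 \<le> int (bsize E)"
    using i k m2 l2 by auto
  have B: "bl (bnc_comp (bnc_comp C i D) (i + k - 1) E) = bl (bnc_comp C i (bnc_comp D k E))"
    unfolding bl_comp'[OF ik w(7) w(8)] bl_comp'[OF i(1) w(13) w(14)]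
      bl_comp'[OF i(1) w(4) w(5)] bl_comp'[OF k(1) w(7) w(8)] bsize_comp ik2 s
    using seq_fc[OF ii, of "bl C" "bl D" "bl E"] unfolding bl_g[OF w(2)] bl_g[OF w(5)] bl_g[OF w(8)]
    by (simp add: fun_eq_iff)
  have R: "rd (bnc_comp (bnc_comp C i D) (i + k - 1) E) = rd (bnc_comp C i (bnc_comp D k E))"
    unfolding rd_comp'[OF ik w(7) w(9)] rd_comp'[OF i(1) w(13) w(15)]
      rd_comp'[OF i(1) w(4) w(6)] rd_comp'[OF k(1) w(7) w(9)]
      bl_comp'[OF i(1) w(4) w(5)] bl_comp'[OF k(1) w(7) w(8)] bsize_comp ik2 s
    using seq_fr[OF ii, of "rd C" "bl C" "rd D" "bl D" "rd E" "bl E"]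
    unfolding bl_g[OF w(2)] bl_g[OF w(5)] bl_g[OF w(8)] rd_g[OF w(3)] rd_g[OF w(6)] rd_g[OF w(9)]
    by (simp add: fun_eq_iff)
  have ik3: "i + k - 1 \<le> bsize (bnc_comp C i D)" using i k by simp
  have W1: "bwf (bnc_comp (bnc_comp C i D) (i + k - 1) E)" by (rule wf_comp[OF CD E ik ik3])
  have W2: "bwf (bnc_comp C i (bnc_comp D k E))" by (rule wf_comp[OF C DE i])
  show ?thesis
  proof (rule bnc_eqI)
    show "bsize (bnc_comp (bnc_comp C i D) (i + k - 1) E) = bsize (bnc_comp C i (bnc_comp D k E))"
      using w by simp
    show "blue (bnc_comp (bnc_comp C i D) (i + k - 1) E) = blue (bnc_comp C i (bnc_comp D k E))"
      by (rule bl_eq[OF wfD(2)[OF W1] wfD(2)[OF W2]]) (use B in auto)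
    show "red (bnc_comp (bnc_comp C i D) (i + k - 1) E) = red (bnc_comp C i (bnc_comp D k E))"
      by (rule rd_eq[OF wfD(3)[OF W1] wfD(3)[OF W2]]) (use R in auto)
  qed
qed


lemma assoc_par_main:
  assumes C: "bwf C" and D: "bwf D" and E: "bwf E" and ij: "1 \<le> i" "i < j" "j \<le> bsize C"
   and m2: "2 \<le> bsize D" and l2: "2 \<le> bsize E"
  shows "bnc_comp (bnc_comp C i D) (j + bsize D - 1) E = bnc_comp (bnc_comp C j E) i D"
proof -
  have i: "1 \<le> i" "i \<le> bsize C" and j: "1 \<le> j" "j \<le> bsize C" using ij by auto
  have CD: "bwf (bnc_comp C i D)" using wf_comp C D i by blast
  have CE: "bwf (bnc_comp C j E)" using wf_comp C E j by blast
  note w = wfD[OF C] wfD[OF D] wfD[OF E] wfD[OF CD] wfD[OF CE]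
  have jm: "1 \<le> j + bsize D - 1" using ij by auto
  have jm2: "int (j + bsize D - 1) = int j + int (bsize D) - 1" using ij m2 by auto
  have ii: "1 \<le> int i" "int i < int j" "int j \<le> int (bsize C)" "2 \<le> int (bsize D)" "2 \<le> int (bsize E)"
    using ij m2 l2 by auto
  have B: "bl (bnc_comp (bnc_comp C i D) (j + bsize D - 1) E) = bl (bnc_comp (bnc_comp C j E) i D)"
    unfolding bl_comp'[OF jm w(7) w(8)] bl_comp'[OF i(1) w(4) w(5)]
      bl_comp'[OF j(1) w(7) w(8)] jm2
    using par_fc[OF ii, of "bl C" "bl D" "bl E"] unfolding bl_g[OF w(2)] bl_g[OF w(5)] bl_g[OF w(8)]
    by (simp add: fun_eq_iff)
  have R: "rd (bnc_comp (bnc_comp C i D) (j + bsize D - 1) E) = rd (bnc_comp (bnc_comp C j E) i D)"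
    unfolding rd_comp'[OF jm w(7) w(9)] rd_comp'[OF i(1) w(4) w(6)]
      rd_comp'[OF j(1) w(7) w(9)]
      bl_comp'[OF i(1) w(4) w(5)] bl_comp'[OF j(1) w(7) w(8)] jm2
    using par_fr[OF ii, of "rd C" "bl C" "rd D" "bl D" "rd E" "bl E"]
    unfolding bl_g[OF w(2)] bl_g[OF w(5)] bl_g[OF w(8)] rd_g[OF w(3)] rd_g[OF w(6)] rd_g[OF w(9)]
    by (simp add: fun_eq_iff)
  have jm3: "j + bsize D - 1 \<le> bsize (bnc_comp C i D)" using ij by simp
  have i3: "i \<le> bsize (bnc_comp C j E)" using ij w by simp
  have W1: "bwf (bnc_comp (bnc_comp C i D) (j + bsize D - 1) E)" by (rule wf_comp[OF CD E jm jm3])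
  have W2: "bwf (bnc_comp (bnc_comp C j E) i D)" by (rule wf_comp[OF CE D i(1) i3])
  show ?thesis
  proof (rule bnc_eqI)
    show "bsize (bnc_comp (bnc_comp C i D) (j + bsize D - 1) E) = bsize (bnc_comp (bnc_comp C j E) i D)"
      using w by simp
    show "blue (bnc_comp (bnc_comp C i D) (j + bsize D - 1) E) = blue (bnc_comp (bnc_comp C j E) i D)"
      by (rule bl_eq[OF wfD(2)[OF W1] wfD(2)[OF W2]]) (use B in auto)
    show "red (bnc_comp (bnc_comp C i D) (j + bsize D - 1) E) = red (bnc_comp (bnc_comp C j E) i D)"
      by (rule rd_eq[OF wfD(3)[OF W1] wfD(3)[OF W2]]) (use R in auto)
  qed
qed

lemma wf_size1: "bwf C \<Longrightarrow> bsize C = 1 \<Longrightarrow> C = bnc_unit" by (simp add: bwf_def)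

lemma assoc_seq:
  assumes C: "bwf C" and D: "bwf D" and E: "bwf E" and i: "1 \<le> i" "i \<le> bsize C" and k: "1 \<le> k" "k \<le> bsize D"
  shows "bnc_comp (bnc_comp C i D) (i + k - 1) E = bnc_comp C i (bnc_comp D k E)"
proof -
  have m1: "1 \<le> bsize D" "1 \<le> bsize E" using D E by (auto simp: bwf_def)
  show ?thesis
  proof (cases "bsize D = 1")
    case True
    then have "D = bnc_unit" "k = 1" using wf_size1[OF D] k by auto
    then show ?thesis using comp_unit[OF C i] unit_comp[OF E] by simp
  next
    case F1: False
    show ?thesis
    proof (cases "bsize E = 1")
      case True
      then have Eu: "E = bnc_unit" using wf_size1[OF E] by auto
      have "bnc_comp (bnc_comp C i D) (i + k - 1) bnc_unit = bnc_comp C i D"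
        by (rule comp_unit) (use wf_comp[OF C D i] i k in auto)
      moreover have "bnc_comp D k bnc_unit = D" by (rule comp_unit[OF D k])
      ultimately show ?thesis using Eu by simp
    next
      case False
      then show ?thesis using assoc_seq_main[OF C D E i k] F1 m1 by auto
    qed
  qed
qed

lemma assoc_par:
  assumes C: "bwf C" and D: "bwf D" and E: "bwf E" and ij: "1 \<le> i" "i < j" "j \<le> bsize C"
  shows "bnc_comp (bnc_comp C i D) (j + bsize D - 1) E = bnc_comp (bnc_comp C j E) i D"
proof -
  have m1: "1 \<le> bsize D" "1 \<le> bsize E" using D E by (auto simp: bwf_def)
  show ?thesis
  proof (cases "bsize D = 1")
    case True
    then have Du: "D = bnc_unit" using wf_size1[OF D] by auto
    have "bnc_comp (bnc_comp C j E) i bnc_unit = bnc_comp C j E"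
      by (rule comp_unit) (use wf_comp[OF C E] ij m1 in auto)
    moreover have "bnc_comp C i bnc_unit = C" by (rule comp_unit[OF C]) (use ij in auto)
    ultimately show ?thesis using Du True by simp
  next
    case F1: False
    show ?thesis
    proof (cases "bsize E = 1")
      case True
      then have Eu: "E = bnc_unit" using wf_size1[OF E] by auto
      have "bnc_comp (bnc_comp C i D) (j + bsize D - 1) bnc_unit = bnc_comp C i D"
        by (rule comp_unit) (use wf_comp[OF C D] ij m1 in auto)
      moreover have "bnc_comp C j bnc_unit = C" by (rule comp_unit[OF C]) (use ij in auto)
      ultimately show ?thesis using Eu by simp
    next
      case False
      then show ?thesis using assoc_par_main[OF C D E ij] F1 m1 by auto
    qed
  qed
qed




definition bg :: "gen \<Rightarrow> int \<Rightarrow> int \<Rightarrow> bool" where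
  "bg G a b \<longleftrightarrow> (case G of S \<Rightarrow> (a = 1 \<and> b = 3) \<or> (a = 2 \<and> b = 3) | W \<Rightarrow> (a = 1 \<and> b = 2) \<or> (a = 2 \<and> b = 3))"

definition TB where "TB G PL PR p q = fc (fc (bg G) 2 PR q) 1 PL p"
definition TR where "TR G RL BL RR BR p q = fr (fr (\<lambda>_ _. False) (bg G) 2 RR BR q) (fc (bg G) 2 BR q) 1 RL BL p"

lemma F_base: "1 \<le> p \<Longrightarrow> 1 \<le> q \<Longrightarrow> TB G (g PL p) (g PR q) p q 1 (p + q + 1) \<longleftrightarrow> G = S"
  by (cases G) (auto simp: TB_def fc_def cz_def g_def bg_def)

lemma F_W1: "1 \<le> p \<Longrightarrow> 1 \<le> q \<Longrightarrow> TB W (g PL p) (g PR q) p q 1 j \<Longrightarrow> j \<le> p + 1"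
  by (auto simp: TB_def fc_def cz_def g_def bg_def split: if_splits)

lemma F_W2: "1 \<le> p \<Longrightarrow> 1 \<le> q \<Longrightarrow> TB W (g PL p) (g PR q) p q 1 (p + 1) \<longleftrightarrow> g PL p 1 (p + 1)"
  by (auto simp: TB_def fc_def cz_def g_def bg_def split: if_splits)

lemma F_S1: "1 \<le> p \<Longrightarrow> 1 \<le> q \<Longrightarrow> TR S (g RL p) (g BL p) (g RR q) (g BR q) p q 1 j \<Longrightarrow> j \<le> p + 1"
  by (auto simp: TR_def fr_def fc_def cz_def g_def bg_def split: if_splits)

lemma F_S2: "1 \<le> p \<Longrightarrow> 1 \<le> q \<Longrightarrow> \<not> RL 1 (p + 1) \<Longrightarrow> TR S (g RL p) (g BL p) (g RR q) (g BR q) p q 1 (p + 1) \<longleftrightarrow> \<not> g BL p 1 (p + 1)"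
  by (auto simp: TR_def fr_def fc_def cz_def g_def bg_def split: if_splits)

lemma F_L: "1 \<le> p \<Longrightarrow> 1 \<le> q \<Longrightarrow>
  g PL p a b \<longleftrightarrow> (TB G (g PL p) (g PR q) p q a b \<and> b \<le> p + 1 \<and> (a, b) \<noteq> (1, p + 1)) \<or> ((a, b) = (1, p + 1) \<and> g PL p 1 (p + 1))"
  by (cases G) (auto simp: TB_def fc_def cz_def g_def bg_def split: if_splits)

lemma F_R: "1 \<le> p \<Longrightarrow> 1 \<le> q \<Longrightarrow>
  g PR q a b \<longleftrightarrow> 1 \<le> a \<and> ((TB G (g PL p) (g PR q) p q (a + p) (b + p) \<and> (a, b) \<noteq> (1, q + 1)) \<or> ((a, b) = (1, q + 1) \<and> TB G (g PL p) (g PR q) p q (p + 1) (p + q + 1)))"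
  by (cases G; auto simp: TB_def fc_def cz_def g_def bg_def split: if_splits; metis add.commute)

lemma F_RL: "1 \<le> p \<Longrightarrow> 1 \<le> q \<Longrightarrow> \<not> RL 1 (p + 1) \<Longrightarrow>
  g RL p a b \<longleftrightarrow> (TR G (g RL p) (g BL p) (g RR q) (g BR q) p q a b \<and> b \<le> p + 1 \<and> (a, b) \<noteq> (1, p + 1))"
  by (cases G) (auto simp: TR_def fr_def fc_def cz_def g_def bg_def split: if_splits)

lemma F_RR: "1 \<le> p \<Longrightarrow> 1 \<le> q \<Longrightarrow> \<not> RR 1 (q + 1) \<Longrightarrow>
  g RR q a b \<longleftrightarrow> 1 \<le> a \<and> TR G (g RL p) (g BL p) (g RR q) (g BR q) p q (a + p) (b + p)"
  by (cases G; auto simp: TR_def fr_def fc_def cz_def g_def bg_def split: if_splits; metis add.commute)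


lemma gen_wf: "bwf (gen_bnc G)" "bsize (gen_bnc G) = 2"
  by (cases G; auto simp: bwf_def s_bnc_def w_bnc_def arcs_def)+

lemma bl_gen: "bl (gen_bnc G) = bg G"
proof (intro ext)
  fix a b :: int
  show "bl (gen_bnc G) a b = bg G a b"
    by (cases G) (auto simp: bl_def bg_def s_bnc_def w_bnc_def nat_eq_iff)
qed

lemma rd_gen: "rd (gen_bnc G) = (\<lambda>_ _. False)"
  by (cases G) (auto simp: rd_def s_bnc_def w_bnc_def fun_eq_iff)

lemma arity_pos: "1 \<le> arity t"
  by (induction t) auto

lemma eval_wf: "bwf (eval t) \<and> bsize (eval t) = arity t"
proof (induction t)
  case Leaf
  have "bsize bnc_unit = 1" by (simp add: bnc_unit_def)
  then show ?case by (simp add: wf_unit)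
next
  case (Node G l r)
  have GR: "bwf (bnc_comp (gen_bnc G) 2 (eval r))"
    by (rule wf_comp) (use gen_wf Node in auto)
  have "bwf (bnc_comp (bnc_comp (gen_bnc G) 2 (eval r)) 1 (eval l))"
    by (rule wf_comp[OF GR]) (use Node GR wfD[OF GR] in auto)
  then show ?case using Node gen_wf arity_pos[of l] arity_pos[of r] by simp
qed

lemma eval_wf1: "bwf (eval t)" and eval_size[simp]: "bsize (eval t) = arity t"
  using eval_wf by auto

lemma one2: "1 \<le> (2::nat)" by simp

lemma eval_Node_bl: "bl (eval (Node G l r)) = TB G (bl (eval l)) (bl (eval r)) (int (arity l)) (int (arity r))"
proof -
  note wl = wfD[OF eval_wf1[of l]] and wr = wfD[OF eval_wf1[of r]]
  have GR: "bwf (bnc_comp (gen_bnc G) 2 (eval r))"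
    by (rule wf_comp) (use gen_wf eval_wf1 in auto)
  show ?thesis
    unfolding eval.simps bl_comp'[OF order_refl wl(1) wl(2)] bl_comp'[OF one2 wr(1) wr(2)] bl_gen TB_def
    by simp
qed

lemma eval_Node_rd: "rd (eval (Node G l r)) = TR G (rd (eval l)) (bl (eval l)) (rd (eval r)) (bl (eval r)) (int (arity l)) (int (arity r))"
proof -
  note wl = wfD[OF eval_wf1[of l]] and wr = wfD[OF eval_wf1[of r]]
  show ?thesis
    unfolding eval.simps rd_comp'[OF order_refl wl(1) wl(3)] rd_comp'[OF one2 wr(1) wr(3)]
      bl_comp'[OF one2 wr(1) wr(2)] bl_gen rd_gen TR_def
    by simp
qed

lemma bl_gen_eval: "g (bl (eval t)) (int (arity t)) = bl (eval t)"
  using bl_g[OF wfD(2)[OF eval_wf1[of t]]] by simp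
lemma rd_gen_eval: "g (rd (eval t)) (int (arity t)) = rd (eval t)"
  using rd_g[OF wfD(3)[OF eval_wf1[of t]]] by simp
lemma rd_nobase: "\<not> rd (eval t) 1 (int (arity t) + 1)"
  using eval_wf1[of t] by (auto simp: bwf_def rd_def nat_add_distrib)


lemma eval_Node_blg: "bl (eval (Node G l r)) = TB G (g (bl (eval l)) (int (arity l))) (g (bl (eval r)) (int (arity r))) (int (arity l)) (int (arity r))"
  unfolding bl_gen_eval by (rule eval_Node_bl)

lemma eval_Node_rdg: "rd (eval (Node G l r)) = TR G (g (rd (eval l)) (int (arity l))) (g (bl (eval l)) (int (arity l))) (g (rd (eval r)) (int (arity r))) (g (bl (eval r)) (int (arity r))) (int (arity l)) (int (arity r))"
  unfolding bl_gen_eval rd_gen_eval by (rule eval_Node_rd)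

fun root_is :: "gen \<Rightarrow> tree \<Rightarrow> bool" where
  "root_is G Leaf = False"
| "root_is G (Node H l r) = (H = G)"

fun normal :: "tree \<Rightarrow> bool" where
  "normal Leaf = True"
| "normal (Node G l r) = (normal l \<and> normal r \<and> \<not> root_is G l)"

lemma base_blue: "bl (eval t) 1 (int (arity t) + 1) \<longleftrightarrow> (t = Leaf \<or> root_is S t)"
proof (cases t)
  case Leaf
  then show ?thesis by (simp add: bl_def bnc_unit_def)
next
  case (Node G l r)
  have "TB G (g (bl (eval l)) (int (arity l))) (g (bl (eval r)) (int (arity r))) (int (arity l)) (int (arity r)) 1 (int (arity l) + int (arity r) + 1) \<longleftrightarrow> G = S"
    by (rule F_base) (use arity_pos in auto)
  then show ?thesis using Node eval_Node_blg by simp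
qed

definition baseL :: "gen \<Rightarrow> (int \<Rightarrow> int \<Rightarrow> bool) \<Rightarrow> (int \<Rightarrow> int \<Rightarrow> bool) \<Rightarrow> int \<Rightarrow> bool" where
  "baseL G BT RT p = (if G = W then BT 1 (p + 1) else \<not> RT 1 (p + 1))"

lemma decomp:
  fixes G l r
  defines "BT \<equiv> bl (eval (Node G l r))" and "RT \<equiv> rd (eval (Node G l r))"
    and "p \<equiv> int (arity l)" and "q \<equiv> int (arity r)"
  shows "bl (eval l) = (\<lambda>a b. (BT a b \<and> b \<le> p + 1 \<and> (a, b) \<noteq> (1, p + 1)) \<or> ((a, b) = (1, p + 1) \<and> baseL G BT RT p))"
    and "rd (eval l) = (\<lambda>a b. RT a b \<and> b \<le> p + 1 \<and> (a, b) \<noteq> (1, p + 1))"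
    and "bl (eval r) = (\<lambda>a b. 1 \<le> a \<and> ((BT (a + p) (b + p) \<and> (a, b) \<noteq> (1, q + 1)) \<or> ((a, b) = (1, q + 1) \<and> BT (p + 1) (p + q + 1))))"
    and "rd (eval r) = (\<lambda>a b. 1 \<le> a \<and> RT (a + p) (b + p))"
proof -
  have p1: "1 \<le> p" and q1: "1 \<le> q" using arity_pos unfolding p_def q_def by (metis of_nat_1 of_nat_le_iff)+
  have BT: "BT = TB G (g (bl (eval l)) p) (g (bl (eval r)) q) p q" unfolding BT_def p_def q_def by (rule eval_Node_blg)
  have RT: "RT = TR G (g (rd (eval l)) p) (g (bl (eval l)) p) (g (rd (eval r)) q) (g (bl (eval r)) q) p q"
    unfolding RT_def p_def q_def by (rule eval_Node_rdg)
  have gl: "g (bl (eval l)) p = bl (eval l)" "g (rd (eval l)) p = rd (eval l)"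
    and gr: "g (bl (eval r)) q = bl (eval r)" "g (rd (eval r)) q = rd (eval r)"
    unfolding p_def q_def by (rule bl_gen_eval rd_gen_eval)+
  have nl: "\<not> rd (eval l) 1 (p + 1)" and nr: "\<not> rd (eval r) 1 (q + 1)"
    unfolding p_def q_def by (rule rd_nobase)+
  have BT0: "TB G (bl (eval l)) (bl (eval r)) p q = BT" unfolding BT_def p_def q_def by (rule eval_Node_bl[symmetric])
  have RT0: "TR G (rd (eval l)) (bl (eval l)) (rd (eval r)) (bl (eval r)) p q = RT"
    unfolding RT_def p_def q_def by (rule eval_Node_rd[symmetric])
  have bL: "baseL G BT RT p \<longleftrightarrow> bl (eval l) 1 (p + 1)"
  proof (cases G)
    case S
    have "RT 1 (p + 1) \<longleftrightarrow> \<not> bl (eval l) 1 (p + 1)"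
      using F_S2[where RL="rd (eval l)" and BL="bl (eval l)" and RR="rd (eval r)" and BR="bl (eval r)", OF p1 q1 nl]
      unfolding gl gr S[symmetric] RT0 .
    then show ?thesis using S unfolding baseL_def by simp
  next
    case W
    have "BT 1 (p + 1) \<longleftrightarrow> bl (eval l) 1 (p + 1)"
      using F_W2[where PL="bl (eval l)" and PR="bl (eval r)", OF p1 q1]
      unfolding gl gr W[symmetric] BT0 .
    then show ?thesis using W unfolding baseL_def by simp
  qed
  have L1: "bl (eval l) a b \<longleftrightarrow> (BT a b \<and> b \<le> p + 1 \<and> (a, b) \<noteq> (1, p + 1)) \<or> ((a, b) = (1, p + 1) \<and> bl (eval l) 1 (p + 1))" for a b
    using F_L[where PL="bl (eval l)" and G=G and PR="bl (eval r)", OF p1 q1, of a b] unfolding gl gr BT0 .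
  have L2: "rd (eval l) a b \<longleftrightarrow> RT a b \<and> b \<le> p + 1 \<and> (a, b) \<noteq> (1, p + 1)" for a b
    using F_RL[where RL="rd (eval l)" and G=G and BL="bl (eval l)" and RR="rd (eval r)" and BR="bl (eval r)", OF p1 q1 nl, of a b]
    unfolding gl gr RT0 .
  have R1: "bl (eval r) a b \<longleftrightarrow> 1 \<le> a \<and> ((BT (a + p) (b + p) \<and> (a, b) \<noteq> (1, q + 1)) \<or> ((a, b) = (1, q + 1) \<and> BT (p + 1) (p + q + 1)))" for a b
    using F_R[where PR="bl (eval r)" and G=G and PL="bl (eval l)", OF p1 q1, of a b] unfolding gl gr BT0 .
  have R2: "rd (eval r) a b \<longleftrightarrow> 1 \<le> a \<and> RT (a + p) (b + p)" for a b
    using F_RR[where RR="rd (eval r)" and G=G and RL="rd (eval l)" and BL="bl (eval l)" and BR="bl (eval r)", OF p1 q1 nr, of a b]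
    unfolding gl gr RT0 .
  show "bl (eval l) = (\<lambda>a b. (BT a b \<and> b \<le> p + 1 \<and> (a, b) \<noteq> (1, p + 1)) \<or> ((a, b) = (1, p + 1) \<and> baseL G BT RT p))"
    unfolding bL by (intro ext) (rule L1)
  show "rd (eval l) = (\<lambda>a b. RT a b \<and> b \<le> p + 1 \<and> (a, b) \<noteq> (1, p + 1))"
    by (intro ext) (rule L2)
  show "bl (eval r) = (\<lambda>a b. 1 \<le> a \<and> ((BT (a + p) (b + p) \<and> (a, b) \<noteq> (1, q + 1)) \<or> ((a, b) = (1, q + 1) \<and> BT (p + 1) (p + q + 1))))"
    by (intro ext) (rule R1)
  show "rd (eval r) = (\<lambda>a b. 1 \<le> a \<and> RT (a + p) (b + p))"
    by (intro ext) (rule R2)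
qed


lemma bnc_eq_pred: assumes "bwf X" "bwf Y" "bsize X = bsize Y" "bl X = bl Y" "rd X = rd Y" shows "X = Y"
proof (rule bnc_eqI)
  show "bsize X = bsize Y" by fact
  show "blue X = blue Y" by (rule bl_eq[OF wfD(2)[OF assms(1)] wfD(2)[OF assms(2)]]) (simp add: assms(4))
  show "red X = red Y" by (rule rd_eq[OF wfD(3)[OF assms(1)] wfD(3)[OF assms(2)]]) (simp add: assms(5))
qed

lemma arity_Leaf: "arity t = 1 \<longleftrightarrow> t = Leaf"
proof (cases t)
  case (Node G a b)
  then show ?thesis using arity_pos[of a] arity_pos[of b] by simp
qed simp

lemma gen2: "G \<noteq> W \<longleftrightarrow> G = S" "G \<noteq> S \<longleftrightarrow> G = W" by (cases G; simp)+

lemma root_cases: "\<not> root_is W l \<Longrightarrow> l = Leaf \<or> root_is S l" "\<not> root_is S l \<Longrightarrow> l \<noteq> Leaf \<Longrightarrow> root_is W l"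
  by (cases l; simp add: gen2)+

lemma split_le:
  assumes nt: "normal (Node G l r)" and nu: "normal (Node G l' r')"
    and e: "eval (Node G l r) = eval (Node G l' r')"
  shows "arity l \<le> arity l'"
proof -
  let ?p = "int (arity l)" and ?q = "int (arity r)" and ?p' = "int (arity l')" and ?q' = "int (arity r')"
  have p1: "1 \<le> ?p" "1 \<le> ?q" "1 \<le> ?p'" "1 \<le> ?q'" using arity_pos by (metis of_nat_1 of_nat_le_iff)+
  have BT: "bl (eval (Node G l r)) = TB G (g (bl (eval l)) ?p) (g (bl (eval r)) ?q) ?p ?q" by (rule eval_Node_blg)
  have BT': "bl (eval (Node G l r)) = TB G (g (bl (eval l')) ?p') (g (bl (eval r')) ?q') ?p' ?q'"
    unfolding e by (rule eval_Node_blg)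
  have RT: "rd (eval (Node G l r)) = TR G (g (rd (eval l)) ?p) (g (bl (eval l)) ?p) (g (rd (eval r)) ?q) (g (bl (eval r)) ?q) ?p ?q" by (rule eval_Node_rdg)
  have RT': "rd (eval (Node G l r)) = TR G (g (rd (eval l')) ?p') (g (bl (eval l')) ?p') (g (rd (eval r')) ?q') (g (bl (eval r')) ?q') ?p' ?q'"
    unfolding e by (rule eval_Node_rdg)
  show ?thesis
  proof (cases G)
    case W
    have "l = Leaf \<or> root_is S l" using nt W root_cases(1) by simp
    then have "bl (eval l) 1 (?p + 1)" using base_blue[of l] by simp
    then have "g (bl (eval l)) ?p 1 (?p + 1)" by (simp add: bl_gen_eval)
    then have "bl (eval (Node G l r)) 1 (?p + 1)" using F_W2[OF p1(1,2), of "bl (eval l)" "bl (eval r)"] W BT by simp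
    then have "TB W (g (bl (eval l')) ?p') (g (bl (eval r')) ?q') ?p' ?q' 1 (?p + 1)" using BT' W by simp
    then have "?p + 1 \<le> ?p' + 1" by (rule F_W1[OF p1(3,4)])
    then show ?thesis by simp
  next
    case S
    show ?thesis
    proof (rule ccontr)
      assume "\<not> arity l \<le> arity l'"
      then have lt: "arity l' < arity l" by simp
      then have "arity l \<noteq> 1" using arity_pos[of l'] by simp
      then have "l \<noteq> Leaf" using arity_Leaf by auto
      then have "root_is W l" using nt S root_cases(2) by simp
      then have "\<not> bl (eval l) 1 (?p + 1)" using base_blue[of l] by (cases l) auto
      then have "\<not> g (bl (eval l)) ?p 1 (?p + 1)" by (simp add: bl_gen_eval)
      then have "rd (eval (Node G l r)) 1 (?p + 1)"
        using F_S2[where RL="rd (eval l)" and BL="bl (eval l)" and RR="rd (eval r)" and BR="bl (eval r)", OF p1(1,2) rd_nobase[of l]] S RT by simp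
      then have "TR S (g (rd (eval l')) ?p') (g (bl (eval l')) ?p') (g (rd (eval r')) ?q') (g (bl (eval r')) ?q') ?p' ?q' 1 (?p + 1)"
        using RT' S by simp
      then have "?p + 1 \<le> ?p' + 1" by (rule F_S1[OF p1(3,4)])
      then show False using lt by simp
    qed
  qed
qed

lemma inj_normal: "normal t \<Longrightarrow> normal u \<Longrightarrow> eval t = eval u \<Longrightarrow> t = u"
proof (induction t arbitrary: u)
  case Leaf
  have "arity u = 1" using arg_cong[OF Leaf.prems(3), of bsize] by (simp add: bnc_unit_def)
  then show ?case using arity_Leaf by auto
next
  case (Node G l r)
  have "arity u \<noteq> 1" using arg_cong[OF Node.prems(3), of bsize] arity_pos[of l] arity_pos[of r] gen_wf(2) by simp
  then obtain G' l' r' where u: "u = Node G' l' r'" using arity_Leaf by (cases u) auto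
  let ?p = "int (arity l)" and ?q = "int (arity r)" and ?p' = "int (arity l')" and ?q' = "int (arity r')"
  have n: "arity l + arity r = arity l' + arity r'" using arg_cong[OF Node.prems(3), of bsize] u gen_wf(2)
    arity_pos[of l] arity_pos[of r] arity_pos[of l'] arity_pos[of r'] by simp
  have p1: "1 \<le> ?p" "1 \<le> ?q" "1 \<le> ?p'" "1 \<le> ?q'" using arity_pos by (metis of_nat_1 of_nat_le_iff)+
  have "TB G (g (bl (eval l)) ?p) (g (bl (eval r)) ?q) ?p ?q 1 (?p + ?q + 1) \<longleftrightarrow> G = S"
    by (rule F_base[OF p1(1,2)])
  moreover have "TB G' (g (bl (eval l')) ?p') (g (bl (eval r')) ?q') ?p' ?q' 1 (?p' + ?q' + 1) \<longleftrightarrow> G' = S"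
    by (rule F_base[OF p1(3,4)])
  moreover have "bl (eval (Node G l r)) = bl (eval (Node G' l' r'))" using Node.prems(3) u by simp
  ultimately have "G = S \<longleftrightarrow> G' = S" unfolding eval_Node_blg using n
    by (metis of_nat_add)
  then have GG: "G' = G" by (cases G; cases G') auto
  have nt: "normal (Node G l r)" and nu: "normal (Node G l' r')" using Node.prems u GG by auto
  have e: "eval (Node G l r) = eval (Node G l' r')" using Node.prems u GG by simp
  have pp: "arity l = arity l'" using split_le[OF nt nu e] split_le[OF nu nt e[symmetric]] by simp
  then have qq: "arity r = arity r'" using n by simp
  note d = decomp[where G=G and l=l and r=r] and d' = decomp[where G=G and l=l' and r=r']
  have el: "eval l = eval l'"
    by (rule bnc_eq_pred[OF eval_wf1 eval_wf1]) (use d(1,2) d'(1,2) e pp in simp_all)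
  have er: "eval r = eval r'"
    by (rule bnc_eq_pred[OF eval_wf1 eval_wf1]) (use d(3,4) d'(3,4) e pp qq in simp_all)
  have "l = l'" using Node.IH(1)[of l'] el nt nu by simp
  moreover have "r = r'" using Node.IH(2)[of r'] er nt nu by simp
  ultimately show ?case using u GG by simp
qed


lemma eval_graft: "1 \<le> i \<Longrightarrow> i \<le> arity t \<Longrightarrow> eval (graft t i u) = bnc_comp (eval t) i (eval u)"
proof (induction t arbitrary: i)
  case Leaf
  then show ?case using unit_comp[OF eval_wf1[of u]] by simp
next
  case (Node G l r)
  let ?G = "gen_bnc G" and ?L = "eval l" and ?R = "eval r" and ?U = "eval u"
  let ?p = "arity l" and ?q = "arity r"
  have GR: "bwf (bnc_comp ?G 2 ?R)" by (rule wf_comp) (use gen_wf eval_wf1 in auto)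
  have sGR: "bsize (bnc_comp ?G 2 ?R) = ?q + 1" using gen_wf(2) arity_pos[of r] by simp
  show ?case
  proof (cases "i \<le> ?p")
    case True
    have "eval (graft (Node G l r) i u) = bnc_comp (bnc_comp ?G 2 ?R) 1 (bnc_comp ?L i ?U)"
      using True Node.IH(1)[of i] Node.prems by simp
    also have "\<dots> = bnc_comp (bnc_comp (bnc_comp ?G 2 ?R) 1 ?L) (1 + i - 1) ?U"
      by (rule assoc_seq[symmetric, OF GR eval_wf1 eval_wf1]) (use True Node.prems sGR in auto)
    finally show ?thesis by simp
  next
    case False
    have i1: "1 \<le> i - ?p" "i - ?p \<le> ?q" using False Node.prems by auto
    have "eval (graft (Node G l r) i u) = bnc_comp (bnc_comp ?G 2 (bnc_comp ?R (i - ?p) ?U)) 1 ?L"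
      using False Node.IH(2)[OF i1] by simp
    also have "bnc_comp ?G 2 (bnc_comp ?R (i - ?p) ?U) = bnc_comp (bnc_comp ?G 2 ?R) (2 + (i - ?p) - 1) ?U"
      by (rule assoc_seq[symmetric, OF gen_wf(1) eval_wf1 eval_wf1]) (use i1 gen_wf(2) in auto)
    also have "2 + (i - ?p) - 1 = (i - ?p + 1)" by simp
    also have "bnc_comp (bnc_comp (bnc_comp ?G 2 ?R) (i - ?p + 1) ?U) 1 ?L
        = bnc_comp (bnc_comp (bnc_comp ?G 2 ?R) 1 ?L) (i - ?p + 1 + bsize ?L - 1) ?U"
      by (rule assoc_par[symmetric, OF GR eval_wf1 eval_wf1]) (use i1 sGR in auto)
    also have "i - ?p + 1 + bsize ?L - 1 = i" using False by simp
    finally show ?thesis by simp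
  qed
qed

lemma eval_gtree: "eval (gtree G) = gen_bnc G"
proof -
  have "bnc_comp (gen_bnc G) 2 bnc_unit = gen_bnc G" by (rule comp_unit) (use gen_wf in auto)
  moreover have "bnc_comp (gen_bnc G) 1 bnc_unit = gen_bnc G" by (rule comp_unit) (use gen_wf in auto)
  ultimately show ?thesis by (simp add: gtree_def)
qed

lemma image_eval: "eval ` UNIV = gen_sub"
proof
  show "eval ` UNIV \<subseteq> gen_sub"
  proof clarify
    fix t show "eval t \<in> gen_sub"
    proof (induction t)
      case Leaf then show ?case by (simp add: gen_sub.unit)
    next
      case (Node G l r)
      have G: "gen_bnc G \<in> gen_sub" by (cases G) (auto intro: gen_sub.intros)
      have GR: "bnc_comp (gen_bnc G) 2 (eval r) \<in> gen_sub"
        by (rule gen_sub.comp[OF G Node(2)]) (use gen_wf in auto)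
      show ?case unfolding eval.simps
        by (rule gen_sub.comp[OF GR Node(1)]) (use gen_wf arity_pos[of r] in auto)
    qed
  qed
  show "gen_sub \<subseteq> eval ` UNIV"
  proof
    fix C assume "C \<in> gen_sub"
    then show "C \<in> eval ` UNIV"
    proof induction
      case unit
      then show ?case by (metis eval.simps(1) rangeI)
    next
      case gs
      then show ?case by (metis eval_gtree gen_bnc.simps(1) rangeI)
    next
      case gw
      then show ?case by (metis eval_gtree gen_bnc.simps(2) rangeI)
    next
      case (comp C D i)
      then obtain t u where "C = eval t" "D = eval u" by auto
      then have "bnc_comp C i D = eval (graft t i u)" using comp eval_graft by simp
      then show ?case by simp
    qed
  qed
qed

lemma wb: "1 \<le> bsize w_bnc" "blue w_bnc \<subseteq> arcs (bsize w_bnc)" "red w_bnc \<subseteq> arcs (bsize w_bnc)"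
  "1 \<le> bsize s_bnc" "blue s_bnc \<subseteq> arcs (bsize s_bnc)" "red s_bnc \<subseteq> arcs (bsize s_bnc)"
  by (auto simp: w_bnc_def s_bnc_def arcs_def)
lemma comp_ww: "bnc_comp w_bnc 1 w_bnc = bnc_comp w_bnc 2 w_bnc"
proof (rule bnc_eqI)
  show "bsize (bnc_comp w_bnc 1 w_bnc) = bsize (bnc_comp w_bnc 2 w_bnc)" by simp
  show "blue (bnc_comp w_bnc 1 w_bnc) = blue (bnc_comp w_bnc 2 w_bnc)"
    by (rule set_eqI, clarify, subst blue_comp_iff[OF _ wb(1,2)], simp, subst blue_comp_iff[OF _ wb(1,2)], simp)
      (auto simp: w_bnc_def ci_def)
  show "red (bnc_comp w_bnc 1 w_bnc) = red (bnc_comp w_bnc 2 w_bnc)"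
    by (rule set_eqI, clarify, subst red_comp_iff[OF _ wb(1,3)], simp, subst red_comp_iff[OF _ wb(1,3)], simp)
      (auto simp: w_bnc_def ci_def)
qed
lemma comp_ss: "bnc_comp s_bnc 1 s_bnc = bnc_comp s_bnc 2 w_bnc"
proof (rule bnc_eqI)
  show "bsize (bnc_comp s_bnc 1 s_bnc) = bsize (bnc_comp s_bnc 2 w_bnc)" by (simp add: s_bnc_def w_bnc_def)
  show "blue (bnc_comp s_bnc 1 s_bnc) = blue (bnc_comp s_bnc 2 w_bnc)"
    by (rule set_eqI, clarify, subst blue_comp_iff[OF _ wb(4,5)], simp, subst blue_comp_iff[OF _ wb(1,2)], simp)
      (auto simp: s_bnc_def w_bnc_def ci_def)
  show "red (bnc_comp s_bnc 1 s_bnc) = red (bnc_comp s_bnc 2 w_bnc)"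
    by (rule set_eqI, clarify, subst red_comp_iff[OF _ wb(4,6)], simp, subst red_comp_iff[OF _ wb(1,3)], simp)
      (auto simp: s_bnc_def w_bnc_def ci_def)
qed

lemma arity_gtree: "arity (gtree G) = 2" by (simp add: gtree_def)

lemma cong_eval: "cong t u \<Longrightarrow> eval t = eval u"
proof (induction rule: cong.induct)
  case rel1
  have "eval (graft (gtree W) 1 (gtree W)) = bnc_comp w_bnc 1 w_bnc"
    using eval_graft[of 1 "gtree W" "gtree W"] unfolding arity_gtree eval_gtree by simp
  moreover have "eval (graft (gtree W) 2 (gtree W)) = bnc_comp w_bnc 2 w_bnc"
    using eval_graft[of 2 "gtree W" "gtree W"] unfolding arity_gtree eval_gtree by simp
  ultimately show ?case using comp_ww by simp
next
  case rel2
  have "eval (graft (gtree S) 1 (gtree S)) = bnc_comp s_bnc 1 s_bnc"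
    using eval_graft[of 1 "gtree S" "gtree S"] unfolding arity_gtree eval_gtree by simp
  moreover have "eval (graft (gtree S) 2 (gtree W)) = bnc_comp s_bnc 2 w_bnc"
    using eval_graft[of 2 "gtree S" "gtree W"] unfolding arity_gtree eval_gtree by simp
  ultimately show ?case using comp_ss by simp
next
  case (compL t t' i u)
  have a: "i \<le> arity t'" using compL(3,4) eval_size by metis
  show ?case unfolding eval_graft[OF compL(2,3)] eval_graft[OF compL(2) a] compL(4) ..
next
  case (compR u u' i t)
  show ?case unfolding eval_graft[OF compR(2,3)] compR(4) ..
next
  case (refl t) show ?case ..
next
  case (sym t u) then show ?case by simp
next
  case (trans t u v) then show ?case by simp
qed


lemma cong_Node_l: "cong l l' \<Longrightarrow> cong (Node G l r) (Node G l' r)"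
  using compR[of l l' 1 "Node G Leaf r"] arity_pos[of r] by simp

lemma cong_Node_r: "cong r r' \<Longrightarrow> cong (Node G l r) (Node G l r')"
  using compR[of r r' "arity l + 1" "Node G l Leaf"] by simp

lemma cong_assoc:
  assumes "cong (Node G (Node H Leaf Leaf) Leaf) (Node G' Leaf (Node H' Leaf Leaf))"
  shows "cong (Node G (Node H a b) c) (Node G' a (Node H' b c))"
proof -
  have 1: "cong (graft (Node G (Node H Leaf Leaf) Leaf) 3 c) (graft (Node G' Leaf (Node H' Leaf Leaf)) 3 c)"
    by (rule compL[OF assms]) auto
  have 2: "cong (graft (graft (Node G (Node H Leaf Leaf) Leaf) 3 c) 2 b) (graft (graft (Node G' Leaf (Node H' Leaf Leaf)) 3 c) 2 b)"
    by (rule compL[OF 1]) (auto simp: numeral_eq_Suc)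
  have 3: "cong (graft (graft (graft (Node G (Node H Leaf Leaf) Leaf) 3 c) 2 b) 1 a) (graft (graft (graft (Node G' Leaf (Node H' Leaf Leaf)) 3 c) 2 b) 1 a)"
    by (rule compL[OF 2]) (auto simp: numeral_eq_Suc)
  then show ?thesis using arity_pos[of a] arity_pos[of b] arity_pos[of c] by (simp add: numeral_eq_Suc)
qed

lemma cong_WW: "cong (Node W (Node W a b) c) (Node W a (Node W b c))"
  by (rule cong_assoc) (use cong.rel1 in \<open>simp add: gtree_def\<close>)

lemma cong_SS: "cong (Node S (Node S a b) c) (Node S a (Node W b c))"
  by (rule cong_assoc) (use cong.rel2 in \<open>simp add: gtree_def\<close>)

fun combW :: "tree \<Rightarrow> tree \<Rightarrow> tree" where
  "combW (Node W a b) c = Node W a (combW b c)"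
| "combW t c = Node W t c"

definition combS :: "tree \<Rightarrow> tree \<Rightarrow> tree" where
  "combS l c = (case l of Node S a b \<Rightarrow> Node S a (combW b c) | _ \<Rightarrow> Node S l c)"

fun nf :: "tree \<Rightarrow> tree" where
  "nf Leaf = Leaf"
| "nf (Node W l r) = combW (nf l) (nf r)"
| "nf (Node S l r) = combS (nf l) (nf r)"

lemma combW_ok: "normal l \<Longrightarrow> normal r \<Longrightarrow> normal (combW l r) \<and> cong (Node W l r) (combW l r)"
proof (induction l r rule: combW.induct)
  case (1 a b c)
  then have IH: "normal (combW b c) \<and> cong (Node W b c) (combW b c)" by simp
  have "cong (Node W (Node W a b) c) (Node W a (combW b c))"
    using cong.trans[OF cong_WW cong_Node_r[OF IH[THEN conjunct2]]] .
  then show ?case using 1 IH by simp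
qed (auto intro: cong.refl)

lemma combS_ok: assumes nl: "normal l" and nr: "normal r" shows "normal (combS l r) \<and> cong (Node S l r) (combS l r)"
proof (cases l)
  case Leaf
  then show ?thesis using nr by (auto simp: combS_def intro: cong.refl)
next
  case (Node G a b)
  show ?thesis
  proof (cases G)
    case S
    have IH: "normal (combW b r) \<and> cong (Node W b r) (combW b r)" using combW_ok nl nr Node by simp
    have "cong (Node S (Node S a b) r) (Node S a (combW b r))"
      using cong.trans[OF cong_SS cong_Node_r[OF IH[THEN conjunct2]]] .
    then show ?thesis using nl nr Node S IH by (simp add: combS_def)
  next
    case W
    then show ?thesis using nl nr Node by (auto simp: combS_def intro: cong.refl)
  qed
qed

lemma nf_ok: "normal (nf t) \<and> cong t (nf t)"
proof (induction t rule: nf.induct)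
  case 1
  then show ?case by (simp add: cong.refl)
next
  case (2 l r)
  have c: "cong (Node W l r) (Node W (nf l) (nf r))"
    using cong.trans[OF cong_Node_l[OF 2(1)[THEN conjunct2]] cong_Node_r[OF 2(2)[THEN conjunct2]]] .
  show ?case using combW_ok[of "nf l" "nf r"] 2 cong.trans[OF c] by auto
next
  case (3 l r)
  have c: "cong (Node S l r) (Node S (nf l) (nf r))"
    using cong.trans[OF cong_Node_l[OF 3(1)[THEN conjunct2]] cong_Node_r[OF 3(2)[THEN conjunct2]]] .
  show ?case using combS_ok[of "nf l" "nf r"] 3 cong.trans[OF c] by auto
qed

theorem theorem3p30:
  shows "(\<forall>t i u. 1 \<le> i \<and> i \<le> arity t \<longrightarrow> eval (graft t i u) = bnc_comp (eval t) i (eval u))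
    \<and> (\<forall>t. bsize (eval t) = arity t)
    \<and> eval ` UNIV = gen_sub
    \<and> (\<forall>t u. eval t = eval u \<longleftrightarrow> cong t u)"
proof (intro conjI allI impI)
  fix t i u assume "1 \<le> i \<and> i \<le> arity t"
  then show "eval (graft t i u) = bnc_comp (eval t) i (eval u)" using eval_graft by simp
next
  fix t show "bsize (eval t) = arity t" by simp
next
  show "eval ` UNIV = gen_sub" by (rule image_eval)
next
  fix t u
  show "eval t = eval u \<longleftrightarrow> cong t u"
  proof
    assume e: "eval t = eval u"
    have "eval (nf t) = eval (nf u)"
      using e cong_eval[OF nf_ok[of t, THEN conjunct2]] cong_eval[OF nf_ok[of u, THEN conjunct2]] by simp
    then have "nf t = nf u" using inj_normal nf_ok by blast
    moreover have "cong t (nf t)" "cong (nf u) u" using nf_ok[of t] cong.sym[OF nf_ok[of u, THEN conjunct2]] by auto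
    ultimately show "cong t u" using cong.trans by metis
  next
    assume "cong t u" then show "eval t = eval u" by (rule cong_eval)
  qed
qed


end
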